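(* Let $\mathbf{A}$ be an algebra and let $e$ be an idempotent unary term of $\mathbf{A}$. Then $e$ separates $\mathbf{A}$ if and only if both of the following hold: (1) every isomorphism between subalgebras of $\mathbf{A}$ whose restriction to $e(A)$ is the identity map is the identity on its domain; and (2) every congruence on a subalgebra of $\mathbf{A}$ whose restriction to $e(A)$ is the equality relation is itself the equality relation.
   Context: A unary term $e$ of an algebra $\mathbf{A}$ is idempotent if $\mathbf{A}\models e(e(x))=e(x)$. The set $e(A)$ is then called a neighborhood of $\mathbf{A}$. We say $e$ separates $\mathbf{A}$ (is separating for $\mathbf{A}$) if for all $a\neq b$ in $A$ there is a unary term $g$ of $\mathbf{A}$ with $e(g(a))\neq e(g(b))$. *)

theory Defs
  imports Main
begin

text \<open>An algebra of signature (type of operation symbols 'f, arity function ar)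
  is given by a carrier A and interpretations ops of the operation symbols,
  each operation of symbol f taking argument lists of length ar f.\<close>

definition is_algebra :: "('f \<Rightarrow> nat) \<Rightarrow> 'a set \<Rightarrow> ('f \<Rightarrow> 'a list \<Rightarrow> 'a) \<Rightarrow> bool" where
  "is_algebra ar A ops \<longleftrightarrow> A \<noteq> {} \<and>
     (\<forall>f xs. length xs = ar f \<and> set xs \<subseteq> A \<longrightarrow> ops f xs \<in> A)"

datatype 'f uterm = X | Op 'f "'f uterm list"

fun wf_uterm :: "('f \<Rightarrow> nat) \<Rightarrow> 'f uterm \<Rightarrow> bool" where
  "wf_uterm ar X = True"
| "wf_uterm ar (Op f ts) = (length ts = ar f \<and> (\<forall>t\<in>set ts. wf_uterm ar t))"

fun ueval :: "('f \<Rightarrow> 'a list \<Rightarrow> 'a) \<Rightarrow> 'f uterm \<Rightarrow> 'a \<Rightarrow> 'a" where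
  "ueval ops X x = x"
| "ueval ops (Op f ts) x = ops f (map (\<lambda>t. ueval ops t x) ts)"

definition idempotent_term :: "('f \<Rightarrow> nat) \<Rightarrow> 'a set \<Rightarrow> ('f \<Rightarrow> 'a list \<Rightarrow> 'a) \<Rightarrow> 'f uterm \<Rightarrow> bool" where
  "idempotent_term ar A ops e \<longleftrightarrow> wf_uterm ar e \<and>
     (\<forall>x\<in>A. ueval ops e (ueval ops e x) = ueval ops e x)"

definition separates :: "('f \<Rightarrow> nat) \<Rightarrow> 'a set \<Rightarrow> ('f \<Rightarrow> 'a list \<Rightarrow> 'a) \<Rightarrow> 'f uterm \<Rightarrow> bool" where
  "separates ar A ops e \<longleftrightarrow>
     (\<forall>a\<in>A. \<forall>b\<in>A. a \<noteq> b \<longrightarrow>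
        (\<exists>g. wf_uterm ar g \<and> ueval ops e (ueval ops g a) \<noteq> ueval ops e (ueval ops g b)))"

definition is_subalgebra :: "('f \<Rightarrow> nat) \<Rightarrow> 'a set \<Rightarrow> ('f \<Rightarrow> 'a list \<Rightarrow> 'a) \<Rightarrow> 'a set \<Rightarrow> bool" where
  "is_subalgebra ar A ops B \<longleftrightarrow> B \<subseteq> A \<and> B \<noteq> {} \<and>
     (\<forall>f xs. length xs = ar f \<and> set xs \<subseteq> B \<longrightarrow> ops f xs \<in> B)"

definition is_iso :: "('f \<Rightarrow> nat) \<Rightarrow> ('f \<Rightarrow> 'a list \<Rightarrow> 'a) \<Rightarrow> 'a set \<Rightarrow> 'a set \<Rightarrow> ('a \<Rightarrow> 'a) \<Rightarrow> bool" where
  "is_iso ar ops B C h \<longleftrightarrow> bij_betw h B C \<and>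
     (\<forall>f xs. length xs = ar f \<and> set xs \<subseteq> B \<longrightarrow> h (ops f xs) = ops f (map h xs))"

definition is_congruence :: "('f \<Rightarrow> nat) \<Rightarrow> ('f \<Rightarrow> 'a list \<Rightarrow> 'a) \<Rightarrow> 'a set \<Rightarrow> 'a rel \<Rightarrow> bool" where
  "is_congruence ar ops B \<theta> \<longleftrightarrow> equiv B \<theta> \<and>
     (\<forall>f xs ys. length xs = ar f \<and> length ys = ar f \<and> list_all2 (\<lambda>x y. (x, y) \<in> \<theta>) xs ys
        \<longrightarrow> (ops f xs, ops f ys) \<in> \<theta>)"

end

theory Submission
  imports Defs
begin

lemma ueval_closed:
  assumes cl: "\<forall>f xs. length xs = ar f \<and> set xs \<subseteq> B \<longrightarrow> ops f xs \<in> B" and x: "x \<in> B"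
  shows "wf_uterm ar t \<Longrightarrow> ueval ops t x \<in> B"
proof (induction t)
  case X then show ?case using x by simp
next
  case (Op f ts)
  then have "set (map (\<lambda>t. ueval ops t x) ts) \<subseteq> B" by auto
  then show ?case using cl Op.prems by simp
qed

lemma ueval_hom:
  assumes iso: "is_iso ar ops B C h"
    and cl: "\<forall>f xs. length xs = ar f \<and> set xs \<subseteq> B \<longrightarrow> ops f xs \<in> B" and x: "x \<in> B"
  shows "wf_uterm ar t \<Longrightarrow> h (ueval ops t x) = ueval ops t (h x)"
proof (induction t)
  case X then show ?case by simp
next
  case (Op f ts)
  have "set (map (\<lambda>t. ueval ops t x) ts) \<subseteq> B"
    using Op.prems ueval_closed[OF cl x] by auto
  then have "h (ueval ops (Op f ts) x) = ops f (map h (map (\<lambda>t. ueval ops t x) ts))"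
    using iso Op.prems unfolding is_iso_def by simp
  also have "\<dots> = ueval ops (Op f ts) (h x)"
    using Op by (simp add: comp_def cong: map_cong)
  finally show ?case .
qed

lemma ueval_cong:
  assumes c: "is_congruence ar ops B \<theta>" and xy: "(x, y) \<in> \<theta>"
  shows "wf_uterm ar t \<Longrightarrow> (ueval ops t x, ueval ops t y) \<in> \<theta>"
proof (induction t)
  case X then show ?case using xy by simp
next
  case (Op f ts)
  have "list_all2 (\<lambda>x y. (x, y) \<in> \<theta>) (map (\<lambda>t. ueval ops t x) ts) (map (\<lambda>t. ueval ops t y) ts)"
    using Op by (auto simp: list_all2_map1 list_all2_map2 list_all2_same)
  then show ?case using c Op.prems unfolding is_congruence_def by simp
qed

fun usubst :: "'f uterm \<Rightarrow> 'f uterm \<Rightarrow> 'f uterm" where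
  "usubst s X = s"
| "usubst s (Op f ts) = Op f (map (usubst s) ts)"

lemma usubst_eval: "ueval ops (usubst s t) x = ueval ops t (ueval ops s x)"
  by (induction t) (auto simp: comp_def cong: map_cong)

lemma usubst_wf: "wf_uterm ar s \<Longrightarrow> wf_uterm ar t \<Longrightarrow> wf_uterm ar (usubst s t)"
  by (induction t) auto
lemma list_choose:
  "set xs \<subseteq> {ueval ops t a | t. wf_uterm ar t} \<Longrightarrow>
   \<exists>ts. (\<forall>t\<in>set ts. wf_uterm ar t) \<and> xs = map (\<lambda>t. ueval ops t a) ts"
proof (induction xs)
  case Nil then show ?case by simp
next
  case (Cons x xs)
  then obtain ts where ts: "\<forall>t\<in>set ts. wf_uterm ar t" "xs = map (\<lambda>t. ueval ops t a) ts" by auto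
  from Cons.prems obtain t where "wf_uterm ar t" "x = ueval ops t a" by auto
  then show ?case using ts by (intro exI[of _ "t # ts"]) auto
qed

lemma gen_sub:
  assumes alg: "is_algebra ar A ops" and a: "a \<in> A"
  shows "is_subalgebra ar A ops {ueval ops t a | t. wf_uterm ar t}"
proof -
  have clA: "\<forall>f xs. length xs = ar f \<and> set xs \<subseteq> A \<longrightarrow> ops f xs \<in> A"
    using alg unfolding is_algebra_def by blast
  have "{ueval ops t a | t. wf_uterm ar t} \<subseteq> A" using ueval_closed[OF clA a] by auto
  moreover have "a \<in> {ueval ops t a | t. wf_uterm ar t}"
    by (rule CollectI, rule exI[of _ X]) simp
  moreover have "ops f xs \<in> {ueval ops t a | t. wf_uterm ar t}"
    if len: "length xs = ar f" and sx: "set xs \<subseteq> {ueval ops t a | t. wf_uterm ar t}" for f xs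
  proof -
    obtain ts where ts: "\<forall>t\<in>set ts. wf_uterm ar t" "xs = map (\<lambda>t. ueval ops t a) ts"
      using list_choose[OF sx] by blast
    then have "wf_uterm ar (Op f ts)" "ueval ops (Op f ts) a = ops f xs" using len by auto
    then show ?thesis by (metis (mono_tags, lifting) CollectI)
  qed
  ultimately show ?thesis unfolding is_subalgebra_def by blast
qed

definition liftR :: "'a rel \<Rightarrow> 'a list rel" where
  "liftR R = {(xs, ys). list_all2 (\<lambda>x y. (x, y) \<in> R) xs ys}"

lemma lift_rtrancl:
  assumes sub: "R \<subseteq> B \<times> B" and refl: "\<forall>x\<in>B. (x, x) \<in> R"
  shows "list_all2 (\<lambda>x y. (x, y) \<in> R\<^sup>+) xs ys \<Longrightarrow> (xs, ys) \<in> (liftR R)\<^sup>*"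
proof (induction rule: list_all2_induct)
  case Nil then show ?case by simp
next
  case (Cons x xs y ys)
  have RB: "R\<^sup>+ \<subseteq> B \<times> B" using sub by (rule trancl_subset_Sigma)
  have xB: "x \<in> B" using Cons(1) RB by auto
  have ysB: "set ys \<subseteq> B" using Cons(2) RB
    by (auto simp: list_all2_conv_all_nth in_set_conv_nth) (metis SigmaD2 subsetD)
  have "(x # xs, x # ys) \<in> (liftR R)\<^sup>*"
    using Cons(3)
  proof (induction rule: rtrancl_induct)
    case base then show ?case by simp
  next
    case (step u v)
    then have "(x # u, x # v) \<in> liftR R" using xB refl by (auto simp: liftR_def)
    then show ?case using step(3) by (rule rtrancl_into_rtrancl[rotated])
  qed
  moreover have "(x # ys, y # ys) \<in> (liftR R)\<^sup>*"
    using trancl_into_rtrancl[OF Cons(1)]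
  proof (induction rule: rtrancl_induct)
    case base then show ?case by simp
  next
    case (step u v)
    have "list_all2 (\<lambda>x y. (x, y) \<in> R) ys ys" using ysB refl
      by (auto simp: list_all2_same)
    then have "(u # ys, v # ys) \<in> liftR R" using step(2) by (auto simp: liftR_def)
    then show ?case using step(3) by (rule rtrancl_into_rtrancl[rotated])
  qed
  ultimately show ?case by (rule rtrancl_trans)
qed

lemma lift_apply:
  assumes comp: "\<forall>xs ys. length xs = n \<and> length ys = n \<and> list_all2 (\<lambda>x y. (x, y) \<in> R) xs ys
      \<longrightarrow> (F xs, F ys) \<in> R"
  shows "(xs, ys) \<in> (liftR R)\<^sup>* \<Longrightarrow> length xs = n \<Longrightarrow> (F xs, F ys) \<in> R\<^sup>* \<and> length ys = n"
proof (induction rule: rtrancl_induct)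
  case base then show ?case by simp
next
  case (step u v)
  then have "length u = n" "length v = n" "list_all2 (\<lambda>x y. (x, y) \<in> R) u v"
    by (auto simp: liftR_def list_all2_lengthD)
  then have "(F u, F v) \<in> R" using comp by blast
  then show ?case using step \<open>length v = n\<close> by auto
qed


lemma key:
  assumes alg: "is_algebra ar A ops" and idem: "idempotent_term ar A ops e"
    and a: "a \<in> A" and b: "b \<in> A"
    and ns: "\<forall>g. wf_uterm ar g \<longrightarrow> ueval ops e (ueval ops g a) = ueval ops e (ueval ops g b)"
    and H2: "\<forall>B \<theta>. is_subalgebra ar A ops B \<and> is_congruence ar ops B \<theta>
         \<and> (\<forall>x\<in>B \<inter> ueval ops e ` A. \<forall>y\<in>B \<inter> ueval ops e ` A. (x, y) \<in> \<theta> \<longrightarrow> x = y)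
       \<longrightarrow> \<theta> = Id_on B"
    and t: "wf_uterm ar t" and s: "wf_uterm ar s" and ts: "ueval ops t a = ueval ops s a"
  shows "ueval ops t b = ueval ops s b"
proof -
  define B where "B = {ueval ops t b | t. wf_uterm ar t}"
  define R where "R = {(ueval ops t b, ueval ops s b) | t s. wf_uterm ar t \<and> wf_uterm ar s
     \<and> ueval ops t a = ueval ops s a}"
  have subB: "is_subalgebra ar A ops B" unfolding B_def by (rule gen_sub[OF alg b])
  have RB: "R \<subseteq> B \<times> B" unfolding R_def B_def by blast
  have reflR: "\<forall>x\<in>B. (x, x) \<in> R" unfolding R_def B_def by blast
  have symR: "sym R"
  proof (rule symI)
    fix x y assume "(x, y) \<in> R"
    then obtain t s where "wf_uterm ar t" "wf_uterm ar s" "ueval ops t a = ueval ops s a"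
      "x = ueval ops t b" "y = ueval ops s b" unfolding R_def by blast
    then show "(y, x) \<in> R" unfolding R_def
      by (intro CollectI exI[of _ s] exI[of _ t]) auto
  qed
  have choose: "list_all2 (\<lambda>x y. (x, y) \<in> R) xs ys \<Longrightarrow>
     \<exists>ts ss. list_all2 (\<lambda>t s. wf_uterm ar t \<and> wf_uterm ar s \<and> ueval ops t a = ueval ops s a) ts ss
       \<and> xs = map (\<lambda>t. ueval ops t b) ts \<and> ys = map (\<lambda>t. ueval ops t b) ss" for xs ys
  proof (induction rule: list_all2_induct)
    case Nil then show ?case by simp
  next
    case (Cons x xs y ys)
    then obtain ts ss where IH: "list_all2 (\<lambda>t s. wf_uterm ar t \<and> wf_uterm ar s \<and> ueval ops t a = ueval ops s a) ts ss"
      "xs = map (\<lambda>t. ueval ops t b) ts" "ys = map (\<lambda>t. ueval ops t b) ss" by blast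
    from Cons(1) obtain t s where "wf_uterm ar t" "wf_uterm ar s" "ueval ops t a = ueval ops s a"
      "x = ueval ops t b" "y = ueval ops s b" unfolding R_def by blast
    then show ?case using IH by (intro exI[of _ "t # ts"] exI[of _ "s # ss"]) auto
  qed
  have compR: "\<forall>xs ys. length xs = ar f \<and> length ys = ar f \<and> list_all2 (\<lambda>x y. (x, y) \<in> R) xs ys
      \<longrightarrow> (ops f xs, ops f ys) \<in> R" for f
  proof (intro allI impI)
    fix xs ys assume h: "length xs = ar f \<and> length ys = ar f \<and> list_all2 (\<lambda>x y. (x, y) \<in> R) xs ys"
    then obtain ts ss where c: "list_all2 (\<lambda>t s. wf_uterm ar t \<and> wf_uterm ar s \<and> ueval ops t a = ueval ops s a) ts ss"
       "xs = map (\<lambda>t. ueval ops t b) ts" "ys = map (\<lambda>t. ueval ops t b) ss" using choose by blast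
    have l: "length ts = ar f" "length ss = ar f" using h c by auto
    have w: "\<forall>t\<in>set ts. wf_uterm ar t" "\<forall>t\<in>set ss. wf_uterm ar t" using c(1)
      by (auto simp: list_all2_conv_all_nth in_set_conv_nth)
    have "list_all2 (\<lambda>t s. ueval ops t a = ueval ops s a) ts ss"
      using c(1) by (rule list_all2_mono) auto
    then have m: "map (\<lambda>t. ueval ops t a) ts = map (\<lambda>t. ueval ops t a) ss"
      by (simp add: list_all2_conv_all_nth list_eq_iff_nth_eq)
    have "wf_uterm ar (Op f ts)" "wf_uterm ar (Op f ss)"
      "ueval ops (Op f ts) a = ueval ops (Op f ss) a" using l w m by auto
    moreover have "ops f xs = ueval ops (Op f ts) b" "ops f ys = ueval ops (Op f ss) b"
      using c by auto
    ultimately show "(ops f xs, ops f ys) \<in> R" unfolding R_def by blast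
  qed
  have RtB: "R\<^sup>+ \<subseteq> B \<times> B" using RB by (rule trancl_subset_Sigma)
  have clB: "\<forall>f xs. length xs = ar f \<and> set xs \<subseteq> B \<longrightarrow> ops f xs \<in> B"
    using subB unfolding is_subalgebra_def by blast
  have cong: "is_congruence ar ops B (R\<^sup>+)"
    unfolding is_congruence_def
  proof (intro conjI allI impI)
    show "equiv B (R\<^sup>+)" unfolding equiv_def refl_on_def
      using RtB reflR sym_trancl[OF symR] trans_trancl by blast
  next
    fix f xs ys
    assume h: "length xs = ar f \<and> length ys = ar f \<and> list_all2 (\<lambda>x y. (x, y) \<in> R\<^sup>+) xs ys"
    have "(xs, ys) \<in> (liftR R)\<^sup>*" using lift_rtrancl[OF RB reflR] h by blast
    then have "(ops f xs, ops f ys) \<in> R\<^sup>*" using lift_apply[OF compR] h by blast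
    moreover have "set xs \<subseteq> B" using h RtB
      by (auto simp: list_all2_conv_all_nth in_set_conv_nth) (metis SigmaD1 subsetD)
    then have "ops f xs \<in> B" using clB h by blast
    ultimately show "(ops f xs, ops f ys) \<in> R\<^sup>+" using reflR
      by (metis r_into_trancl' rtrancl_eq_or_trancl)
  qed
  have stepR: "(u, v) \<in> R \<Longrightarrow> ueval ops e u = ueval ops e v" for u v
  proof -
    assume "(u, v) \<in> R"
    then obtain t s where "wf_uterm ar t" "wf_uterm ar s" "ueval ops t a = ueval ops s a"
      "u = ueval ops t b" "v = ueval ops s b" unfolding R_def by blast
    then show ?thesis using ns by metis
  qed
  have eR: "(x, y) \<in> R\<^sup>+ \<Longrightarrow> ueval ops e x = ueval ops e y" for x y
  proof (induction rule: trancl_induct)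
    case (base y)
    then show ?case using stepR by blast
  next
    case (step y z)
    then show ?case using stepR by simp
  qed
  have eid: "x \<in> ueval ops e ` A \<Longrightarrow> ueval ops e x = x" for x
    using idem unfolding idempotent_term_def by auto
  have restr: "\<forall>x\<in>B \<inter> ueval ops e ` A. \<forall>y\<in>B \<inter> ueval ops e ` A. (x, y) \<in> R\<^sup>+ \<longrightarrow> x = y"
  proof (intro ballI impI)
    fix x y assume "x \<in> B \<inter> ueval ops e ` A" "y \<in> B \<inter> ueval ops e ` A" "(x, y) \<in> R\<^sup>+"
    then show "x = y" using eR[of x y] eid[of x] eid[of y] by simp
  qed
  have "R\<^sup>+ = Id_on B"
    using H2 subB cong restr by blast
  moreover have "(ueval ops t b, ueval ops s b) \<in> R" unfolding R_def using t s ts by blast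
  ultimately show ?thesis by (metis Id_onE Pair_inject r_into_trancl')
qed


theorem lemma2p1:
  fixes ar :: "'f \<Rightarrow> nat" and A :: "'a set" and ops :: "'f \<Rightarrow> 'a list \<Rightarrow> 'a"
    and e :: "'f uterm"
  assumes "is_algebra ar A ops"
    and "idempotent_term ar A ops e"
  shows "separates ar A ops e \<longleftrightarrow>
    ((\<forall>B C h. is_subalgebra ar A ops B \<and> is_subalgebra ar A ops C \<and> is_iso ar ops B C h
         \<and> (\<forall>x\<in>B \<inter> ueval ops e ` A. h x = x)
       \<longrightarrow> (\<forall>x\<in>B. h x = x)) \<and>
     (\<forall>B \<theta>. is_subalgebra ar A ops B \<and> is_congruence ar ops B \<theta>
         \<and> (\<forall>x\<in>B \<inter> ueval ops e ` A. \<forall>y\<in>B \<inter> ueval ops e ` A. (x, y) \<in> \<theta> \<longrightarrow> x = y)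
       \<longrightarrow> \<theta> = Id_on B))"
proof -
  note alg = assms(1) and idem = assms(2)
  have we: "wf_uterm ar e" using idem unfolding idempotent_term_def by blast
  have clA: "\<forall>f xs. length xs = ar f \<and> set xs \<subseteq> A \<longrightarrow> ops f xs \<in> A"
    using alg unfolding is_algebra_def by blast
  have eid: "x \<in> ueval ops e ` A \<Longrightarrow> ueval ops e x = x" for x
    using idem unfolding idempotent_term_def by auto
  show ?thesis
  proof
    assume sep: "separates ar A ops e"
    show "(\<forall>B C h. is_subalgebra ar A ops B \<and> is_subalgebra ar A ops C \<and> is_iso ar ops B C h
         \<and> (\<forall>x\<in>B \<inter> ueval ops e ` A. h x = x)
       \<longrightarrow> (\<forall>x\<in>B. h x = x)) \<and>
     (\<forall>B \<theta>. is_subalgebra ar A ops B \<and> is_congruence ar ops B \<theta>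
         \<and> (\<forall>x\<in>B \<inter> ueval ops e ` A. \<forall>y\<in>B \<inter> ueval ops e ` A. (x, y) \<in> \<theta> \<longrightarrow> x = y)
       \<longrightarrow> \<theta> = Id_on B)"
    proof (intro conjI allI impI ballI)
      fix B C h x
      assume H: "is_subalgebra ar A ops B \<and> is_subalgebra ar A ops C \<and> is_iso ar ops B C h
         \<and> (\<forall>x\<in>B \<inter> ueval ops e ` A. h x = x)" and x: "x \<in> B"
      have sB: "is_subalgebra ar A ops B" and sC: "is_subalgebra ar A ops C"
        and iso: "is_iso ar ops B C h" and fx: "\<forall>x\<in>B \<inter> ueval ops e ` A. h x = x"
        using H by auto
      have clB: "\<forall>f xs. length xs = ar f \<and> set xs \<subseteq> B \<longrightarrow> ops f xs \<in> B"
        using sB unfolding is_subalgebra_def by (elim conjE)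
      have xA: "x \<in> A" using sB x unfolding is_subalgebra_def by auto
      have "h x \<in> C" using iso x unfolding is_iso_def bij_betw_def by auto
      then have hxA: "h x \<in> A" using sC unfolding is_subalgebra_def by auto
      show "h x = x"
      proof (rule ccontr)
        assume ne: "h x \<noteq> x"
        then obtain g where g: "wf_uterm ar g"
          "ueval ops e (ueval ops g x) \<noteq> ueval ops e (ueval ops g (h x))"
          using bspec[OF bspec[OF sep[unfolded separates_def] xA] hxA] ne by auto
        have w: "wf_uterm ar (usubst g e)" using usubst_wf[OF g(1) we] .
        have "ueval ops (usubst g e) x \<in> B" using ueval_closed[OF clB x w] .
        moreover have "ueval ops (usubst g e) x \<in> ueval ops e ` A"
          using ueval_closed[OF clA xA g(1)] by (simp add: usubst_eval)
        ultimately have "h (ueval ops (usubst g e) x) = ueval ops (usubst g e) x" using fx by blast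
        moreover have "h (ueval ops (usubst g e) x) = ueval ops (usubst g e) (h x)"
          using ueval_hom[OF iso clB x w] .
        ultimately show False using g(2) by (simp add: usubst_eval)
      qed
    next
      fix B \<theta>
      assume H: "is_subalgebra ar A ops B \<and> is_congruence ar ops B \<theta>
         \<and> (\<forall>x\<in>B \<inter> ueval ops e ` A. \<forall>y\<in>B \<inter> ueval ops e ` A. (x, y) \<in> \<theta> \<longrightarrow> x = y)"
      have clB: "\<forall>f xs. length xs = ar f \<and> set xs \<subseteq> B \<longrightarrow> ops f xs \<in> B"
        using H unfolding is_subalgebra_def by blast
      have BA: "B \<subseteq> A" using H unfolding is_subalgebra_def by blast
      have eq: "equiv B \<theta>" using H unfolding is_congruence_def by blast
      have thB: "\<theta> \<subseteq> B \<times> B" using eq unfolding equiv_def refl_on_def by blast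
      have "\<theta> \<subseteq> Id"
      proof
        fix p assume p: "p \<in> \<theta>"
        obtain x y where pxy: "p = (x, y)" by (cases p)
        have xB: "x \<in> B" and yB: "y \<in> B" using p pxy thB by auto
        show "p \<in> Id"
        proof (rule ccontr)
          assume "p \<notin> Id"
          then have "x \<noteq> y" using pxy by auto
          then obtain g where g: "wf_uterm ar g"
            "ueval ops e (ueval ops g x) \<noteq> ueval ops e (ueval ops g y)"
            using sep xB yB BA unfolding separates_def by blast
          have w: "wf_uterm ar (usubst g e)" using usubst_wf[OF g(1) we] .
          have "(ueval ops (usubst g e) x, ueval ops (usubst g e) y) \<in> \<theta>"
            using ueval_cong[of ar ops B \<theta> x y, OF _ _ w] H p pxy by blast
          moreover have "ueval ops (usubst g e) x \<in> B \<inter> ueval ops e ` A"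
            using ueval_closed[OF clB xB w] ueval_closed[OF clA _ g(1), of x] xB BA
            by (auto simp: usubst_eval)
          moreover have "ueval ops (usubst g e) y \<in> B \<inter> ueval ops e ` A"
            using ueval_closed[OF clB yB w] ueval_closed[OF clA _ g(1), of y] yB BA
            by (auto simp: usubst_eval)
          ultimately show False using H g(2) by (simp add: usubst_eval)
        qed
      qed
      then show "\<theta> = Id_on B" using eq thB unfolding equiv_def refl_on_def Id_on_def by auto
    qed
  next
    assume H: "(\<forall>B C h. is_subalgebra ar A ops B \<and> is_subalgebra ar A ops C \<and> is_iso ar ops B C h
         \<and> (\<forall>x\<in>B \<inter> ueval ops e ` A. h x = x)
       \<longrightarrow> (\<forall>x\<in>B. h x = x)) \<and>
     (\<forall>B \<theta>. is_subalgebra ar A ops B \<and> is_congruence ar ops B \<theta>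
         \<and> (\<forall>x\<in>B \<inter> ueval ops e ` A. \<forall>y\<in>B \<inter> ueval ops e ` A. (x, y) \<in> \<theta> \<longrightarrow> x = y)
       \<longrightarrow> \<theta> = Id_on B)"
    note H1 = conjunct1[OF H] and H2 = conjunct2[OF H]
    show "separates ar A ops e" unfolding separates_def
    proof (intro ballI impI)
      fix a b assume a: "a \<in> A" and b: "b \<in> A" and ab: "a \<noteq> b"
      show "\<exists>g. wf_uterm ar g \<and> ueval ops e (ueval ops g a) \<noteq> ueval ops e (ueval ops g b)"
      proof (rule ccontr)
        assume "\<not> ?thesis"
        then have ns: "\<forall>g. wf_uterm ar g \<longrightarrow> ueval ops e (ueval ops g a) = ueval ops e (ueval ops g b)"
          by blast
        then have ns': "\<forall>g. wf_uterm ar g \<longrightarrow> ueval ops e (ueval ops g b) = ueval ops e (ueval ops g a)"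
          by simp
        have kab: "\<And>t s. wf_uterm ar t \<Longrightarrow> wf_uterm ar s \<Longrightarrow> ueval ops t a = ueval ops s a
            \<Longrightarrow> ueval ops t b = ueval ops s b"
          using key[OF alg idem a b ns H2] by blast
        have kba: "\<And>t s. wf_uterm ar t \<Longrightarrow> wf_uterm ar s \<Longrightarrow> ueval ops t b = ueval ops s b
            \<Longrightarrow> ueval ops t a = ueval ops s a"
          using key[OF alg idem b a ns' H2] by blast
        define Ba where "Ba = {ueval ops t a | t. wf_uterm ar t}"
        define Bb where "Bb = {ueval ops t b | t. wf_uterm ar t}"
        define h where "h x = ueval ops (SOME t. wf_uterm ar t \<and> x = ueval ops t a) b" for x
        have hval: "wf_uterm ar t \<Longrightarrow> h (ueval ops t a) = ueval ops t b" for t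
        proof -
          assume t: "wf_uterm ar t"
          define t' where "t' = (SOME t'. wf_uterm ar t' \<and> ueval ops t a = ueval ops t' a)"
          have "wf_uterm ar t' \<and> ueval ops t a = ueval ops t' a"
            unfolding t'_def by (rule someI[of _ t]) (simp add: t)
          then show ?thesis unfolding h_def t'_def[symmetric] using kab t by metis
        qed
        have subA: "is_subalgebra ar A ops Ba" unfolding Ba_def by (rule gen_sub[OF alg a])
        have subB: "is_subalgebra ar A ops Bb" unfolding Bb_def by (rule gen_sub[OF alg b])
        have iso: "is_iso ar ops Ba Bb h" unfolding is_iso_def
        proof (intro conjI allI impI)
          show "bij_betw h Ba Bb" unfolding bij_betw_def
          proof
            show "inj_on h Ba"
            proof (rule inj_onI)
              fix x y assume "x \<in> Ba" "y \<in> Ba" "h x = h y"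
              then obtain t s where "wf_uterm ar t" "wf_uterm ar s" "x = ueval ops t a"
                "y = ueval ops s a" "h x = h y" unfolding Ba_def by blast
              then show "x = y" using hval kba by metis
            qed
            show "h ` Ba = Bb"
            proof
              show "h ` Ba \<subseteq> Bb" unfolding Ba_def Bb_def using hval by auto
              show "Bb \<subseteq> h ` Ba"
              proof
                fix y assume "y \<in> Bb"
                then obtain t where t: "wf_uterm ar t" "y = ueval ops t b" unfolding Bb_def by blast
                then have "y = h (ueval ops t a)" using hval by simp
                moreover have "ueval ops t a \<in> Ba" unfolding Ba_def using t by blast
                ultimately show "y \<in> h ` Ba" by blast
              qed
            qed
          qed
        next
          fix f xs assume l: "length xs = ar f \<and> set xs \<subseteq> Ba"
          then obtain ts where ts: "\<forall>t\<in>set ts. wf_uterm ar t" "xs = map (\<lambda>t. ueval ops t a) ts"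
            using list_choose[of xs ops a ar] unfolding Ba_def by blast
          have w: "wf_uterm ar (Op f ts)" using ts l by auto
          have "h (ops f xs) = h (ueval ops (Op f ts) a)" using ts by simp
          also have "\<dots> = ueval ops (Op f ts) b" using hval w by blast
          also have "\<dots> = ops f (map h xs)" using ts hval by (simp cong: map_cong)
          finally show "h (ops f xs) = ops f (map h xs)" .
        qed
        have fixe: "\<forall>x\<in>Ba \<inter> ueval ops e ` A. h x = x"
        proof
          fix x assume x: "x \<in> Ba \<inter> ueval ops e ` A"
          then obtain t where t: "wf_uterm ar t" "x = ueval ops t a" unfolding Ba_def by blast
          have xe: "x \<in> ueval ops e ` A" using x by blast
          have ex: "ueval ops e x = x" by (rule eid[OF xe])
          have wt: "wf_uterm ar (usubst t e)" by (rule usubst_wf[OF t(1) we])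
          have x2: "x = ueval ops (usubst t e) a" using ex t(2) by (simp only: usubst_eval)
          have "h x = ueval ops (usubst t e) b" unfolding x2 by (rule hval[OF wt])
          also have "\<dots> = ueval ops e (ueval ops t b)" by (simp only: usubst_eval)
          also have "\<dots> = ueval ops e (ueval ops t a)" using ns t(1) by metis
          also have "\<dots> = x" using ex t(2) by simp
          finally show "h x = x" .
        qed
        have aBa: "a \<in> Ba" unfolding Ba_def by (rule CollectI, rule exI[of _ X]) simp
        have "is_subalgebra ar A ops Ba \<and> is_subalgebra ar A ops Bb \<and> is_iso ar ops Ba Bb h
           \<and> (\<forall>x\<in>Ba \<inter> ueval ops e ` A. h x = x)" using subA subB iso fixe by simp
        then have "\<forall>x\<in>Ba. h x = x" by (rule mp[OF spec[OF spec[OF spec[OF H1, of Ba], of Bb], of h]])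
        then have "h a = a" using aBa by blast
        moreover have "h a = b" using hval[of X] by simp
        ultimately show False using ab by simp
      qed
    qed
  qed
qed

end
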